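(* Let $n\ge 1$, let $w_n\ge\dots\ge w_1>0$ be real weights and let $B\in\{1,\dots,n\}$. Consider RLS (defined in the context) minimising the penalised fitness \[ f(x)=\sum_{i=1}^n w_i x_i+\max\{0,\,B-b(x)\}\cdot(n w_n+1),\qquad b(x)=\sum_{i=1}^n x_i . \] Starting with an arbitrary initial search point, the expected optimisation time of RLS is $O(n^2)$, where the hidden constant does not depend on $n$, the weights, or $B$.
   Context: Problem: minimise $f_{\mathrm{obj}}(x)=\sum_{i=1}^n w_ix_i$ over $x\in\{0,1\}^n$ subject to $x_1+\dots+x_n\ge B$. A search point is optimal if it satisfies the constraint and minimises $f_{\mathrm{obj}}$ among all points satisfying the constraint. RLS: maintain a current search point $x_t$; in each iteration choose $b\in\{1,2\}$ uniformly at random, create $x'$ by flipping $b$ distinct bits of $x_t$ chosen uniformly at random; set $x_{t+1}=x'$ if $f(x')\le f(x_t)$, otherwise $x_{t+1}=x_t$. The optimisation time is the number of iterations until an optimal search point has been sampled for the first time. *)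

theory Defs
  imports "HOL-Probability.Probability"
begin

text \<open>Search points x \<in> {0,1}^n are represented as index sets x \<subseteq> {1..n}:
  i \<in> x means x_i = 1. Flipping the bits in a set S is the symmetric difference.\<close>

definition search_space :: "nat \<Rightarrow> nat set set" where
  "search_space n = {x. x \<subseteq> {1..n}}"

definition ones :: "nat set \<Rightarrow> nat" where
  "ones x = card x"

definition f_obj :: "(nat \<Rightarrow> real) \<Rightarrow> nat set \<Rightarrow> real" where
  "f_obj w x = (\<Sum>i\<in>x. w i)"

definition fit :: "nat \<Rightarrow> (nat \<Rightarrow> real) \<Rightarrow> nat \<Rightarrow> nat set \<Rightarrow> real" where
  "fit n w B x = f_obj w x + max 0 (real B - real (ones x)) * (real n * w n + 1)"

definition optimal :: "nat \<Rightarrow> (nat \<Rightarrow> real) \<Rightarrow> nat \<Rightarrow> nat set \<Rightarrow> bool" where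
  "optimal n w B x \<longleftrightarrow> x \<in> search_space n \<and> ones x \<ge> B \<and>
     (\<forall>y \<in> search_space n. ones y \<ge> B \<longrightarrow> f_obj w x \<le> f_obj w y)"

text \<open>Mutation: choose b \<in> {1,2} uniformly, then a uniformly random set of b distinct
  positions to flip. (If n < b, i.e. n = 1 and b = 2, no bits are flipped.)\<close>
definition flip_set :: "nat \<Rightarrow> nat set pmf" where
  "flip_set n = do {
     b \<leftarrow> pmf_of_set {1, 2::nat};
     (if b \<le> n then pmf_of_set {S. S \<subseteq> {1..n} \<and> card S = b} else return_pmf {})
   }"

definition rls_step :: "nat \<Rightarrow> (nat \<Rightarrow> real) \<Rightarrow> nat \<Rightarrow> nat set \<Rightarrow> nat set pmf" where
  "rls_step n w B x = do {
     S \<leftarrow> flip_set n;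
     let x' = (x - S) \<union> (S - x);
     return_pmf (if fit n w B x' \<le> fit n w B x then x' else x)
   }"

fun rls_traj :: "nat \<Rightarrow> (nat \<Rightarrow> real) \<Rightarrow> nat \<Rightarrow> nat \<Rightarrow> nat set \<Rightarrow> nat set list pmf" where
  "rls_traj n w B 0 x = return_pmf [x]"
| "rls_traj n w B (Suc t) x = do {
     y \<leftarrow> rls_step n w B x;
     ys \<leftarrow> rls_traj n w B t y;
     return_pmf (x # ys)
   }"

text \<open>Pr[T > t] where T is the optimisation time: none of x_0,...,x_t is optimal.\<close>
definition not_yet_opt_prob :: "nat \<Rightarrow> (nat \<Rightarrow> real) \<Rightarrow> nat \<Rightarrow> nat set \<Rightarrow> nat \<Rightarrow> real" where
  "not_yet_opt_prob n w B x0 t =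
     measure_pmf.prob (rls_traj n w B t x0) {xs. \<forall>y \<in> set xs. \<not> optimal n w B y}"

text \<open>Expected optimisation time E[T] = sum_{t \<ge> 0} Pr[T > t] (tail-sum formula,
  valued in [0,\<infinity>]).\<close>
definition expected_opt_time :: "nat \<Rightarrow> (nat \<Rightarrow> real) \<Rightarrow> nat \<Rightarrow> nat set \<Rightarrow> ennreal" where
  "expected_opt_time n w B x0 = (\<Sum>t. ennreal (not_yet_opt_prob n w B x0 t))"

end

theory Submission
  imports Defs
begin
lemma prob_bind_pmf:
  "measure_pmf.prob (bind_pmf p f) A = measure_pmf.expectation p (\<lambda>x. measure_pmf.prob (f x) A)"
  unfolding measure_pmf_bind
  by (rule measure_pmf.measure_bind[where N="count_space UNIV"])
     (auto simp: space_subprob_algebra intro!: measurable_pmf_measure1 prob_space_imp_subprob_space prob_space_measure_pmf)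

lemma nyop_0: "not_yet_opt_prob n w B x 0 = (if optimal n w B x then 0 else 1)"
  by (simp add: not_yet_opt_prob_def indicator_def)

lemma nyop_Suc: "not_yet_opt_prob n w B x (Suc s) =
   (if optimal n w B x then 0 else measure_pmf.expectation (rls_step n w B x) (\<lambda>y. not_yet_opt_prob n w B y s))"
proof -
  have e: "rls_traj n w B (Suc s) x = bind_pmf (rls_step n w B x) (\<lambda>y. map_pmf (Cons x) (rls_traj n w B s y))"
    by (simp add: map_pmf_def)
  show ?thesis
    unfolding not_yet_opt_prob_def e prob_bind_pmf measure_map_pmf
    by (cases "optimal n w B x") (auto simp: vimage_def)
qed

definition Cset :: "nat \<Rightarrow> nat \<Rightarrow> nat set set" where
  "Cset n b = {S. S \<subseteq> {1..n} \<and> card S = b}"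

lemma card_Cset: "card (Cset n b) = n choose b"
  unfolding Cset_def using n_subsets[of "{1..n}" b] by simp

lemma Cset_ne: "b \<le> n \<Longrightarrow> Cset n b \<noteq> {} \<and> finite (Cset n b)"
  using card_Cset[of n b] card_gt_0_iff[of "Cset n b"] by (metis zero_less_binomial_iff)

lemma flip_set_alt: "flip_set n = bind_pmf (pmf_of_set {1,2::nat})
   (\<lambda>b. if b \<le> n then pmf_of_set (Cset n b) else return_pmf {})"
  unfolding flip_set_def Cset_def by (rule refl)

lemma set_flip_set: "S \<in> set_pmf (flip_set n) \<Longrightarrow> S \<subseteq> {1..n} \<and> card S \<le> 2"
proof -
  assume "S \<in> set_pmf (flip_set n)"
  then obtain b where b: "b \<in> {1,2}" and S: "S \<in> set_pmf (if b \<le> n then pmf_of_set (Cset n b) else return_pmf {})"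
    unfolding flip_set_alt by auto
  show ?thesis
  proof (cases "b \<le> n")
    case True
    then show ?thesis using S b Cset_ne[OF True] by (auto simp: Cset_def)
  next
    case False
    then show ?thesis using S by auto
  qed
qed

lemma prob_flip: "measure_pmf.prob (flip_set n) A =
   (measure_pmf.prob (if 1 \<le> n then pmf_of_set (Cset n 1) else return_pmf {}) A
  + measure_pmf.prob (if 2 \<le> n then pmf_of_set (Cset n 2) else return_pmf {}) A) / 2"
  unfolding flip_set_alt prob_bind_pmf by (subst integral_pmf_of_set) auto

lemma half_le: "(c::real) \<le> a \<Longrightarrow> 0 \<le> b \<Longrightarrow> d = c / 2 \<Longrightarrow> d \<le> (a + b) / 2"
  by simp

lemma prob_flip_single:
  assumes "j \<in> {1..n}" "{j} \<in> A"
  shows "measure_pmf.prob (flip_set n) A \<ge> 1 / (2 * real n)"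
proof -
  have n1: "1 \<le> n" using assms by auto
  have "{j} \<in> Cset n 1 \<inter> A" using assms by (auto simp: Cset_def)
  then have "card (Cset n 1 \<inter> A) \<ge> 1"
    using Cset_ne[OF n1] by (metis One_nat_def Suc_leI card_gt_0_iff emptyE finite_Int)
  then have "measure_pmf.prob (pmf_of_set (Cset n 1)) A \<ge> 1 / real n"
    using Cset_ne[OF n1] card_Cset[of n 1] n1
    by (subst measure_pmf_of_set) (auto simp: divide_right_mono)
  moreover have "measure_pmf.prob (if 2 \<le> n then pmf_of_set (Cset n 2) else return_pmf {}) A \<ge> 0" by (rule measure_nonneg)
  moreover have "1 / (2 * real n) = (1 / real n) / 2" by simp
  ultimately show ?thesis unfolding prob_flip if_P[OF n1] using half_le by blast
qed

lemma prob_flip_pairs: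
  assumes "2 \<le> n" "G \<subseteq> Cset n 2 \<inter> A"
  shows "measure_pmf.prob (flip_set n) A \<ge> real (card G) / (real n)^2"
proof -
  have fin: "finite (Cset n 2)" using Cset_ne[OF assms(1)] by auto
  have cg: "card G \<le> card (Cset n 2 \<inter> A)" using assms(2) fin by (intro card_mono) auto
  have ch: "2 * (n choose 2) \<le> n * n" unfolding choose_two by (metis div_times_less_eq_dividend mult.commute mult_le_mono2 diff_le_self le_trans)
  have cpos: "n choose 2 > 0" using assms(1) by simp
  have "real (card G) / (real n)^2 \<le> real (card G) / (2 * real (n choose 2))"
    apply (rule divide_left_mono)
    using ch cpos by (auto simp: power2_eq_square simp flip: of_nat_mult)
  also have "\<dots> \<le> real (card (Cset n 2 \<inter> A)) / (2 * real (n choose 2))"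
    using cg cpos by (simp add: divide_right_mono)
  also have "\<dots> = measure_pmf.prob (pmf_of_set (Cset n 2)) A / 2"
    using Cset_ne[OF assms(1)] by (subst measure_pmf_of_set) (auto simp: card_Cset)
  also have "\<dots> \<le> measure_pmf.prob (flip_set n) A"
    unfolding prob_flip using assms(1) by simp
  finally show ?thesis .
qed

lemma card_split: "finite A \<Longrightarrow> card A = card (A \<inter> X) + card (A - X)"
  by (metis Diff_Diff_Int Int_lower1 card_Diff_subset_Int card_mono finite_Int le_add_diff_inverse card_Diff_subset
      Diff_disjoint Int_Diff_Un card_Un_disjoint finite_Diff Int_Diff_disjoint)

locale rctx =
  fixes n :: nat and w :: "nat \<Rightarrow> real" and B :: nat
  assumes n1: "n \<ge> 1" and w1: "w 1 > 0" and wmono: "\<forall>i. 1 \<le> i \<and> i < n \<longrightarrow> w i \<le> w (Suc i)"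
    and B1: "1 \<le> B" and Bn: "B \<le> n"
begin

lemma w_mono: assumes "1 \<le> i" "i \<le> j" "j \<le> n" shows "w i \<le> w j"
  using assms(2,3) proof (induction j rule: dec_induct)
  case base then show ?case by simp
next
  case (step m)
  then show ?case using wmono[rule_format, of m] assms(1) by auto
qed

lemma w_pos: "1 \<le> i \<Longrightarrow> i \<le> n \<Longrightarrow> w i > 0"
  using w_mono[of 1 i] w1 by auto

lemma w_le_wn: "1 \<le> i \<Longrightarrow> i \<le> n \<Longrightarrow> w i \<le> w n"
  using w_mono[of i n] by auto

definition "M = real n * w n + 1"
abbreviation "W x \<equiv> f_obj w x"

lemma M_pos: "M > 0" unfolding M_def using w_pos[of n] n1 by (simp add: add_pos_nonneg)

lemma W_bounds: assumes "x \<subseteq> {1..n}" shows "0 \<le> W x" "W x < M"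
proof -
  have fx: "finite x" using assms finite_subset by blast
  show "0 \<le> W x" unfolding f_obj_def using assms w_pos by (intro sum_nonneg) (metis atLeastAtMost_iff less_imp_le subsetD)
  have "W x \<le> real (card x) * w n" unfolding f_obj_def
    using assms w_le_wn by (intro sum_bounded_above) auto
  also have "\<dots> \<le> real n * w n"
    using card_mono[OF _ assms] w_pos[of n] n1 by (intro mult_right_mono) auto
  finally show "W x < M" unfolding M_def by simp
qed

lemma fit_eq: "fit n w B x = W x + real (B - card x) * M"
  unfolding fit_def M_def ones_def by (cases "card x \<le> B") (auto simp: of_nat_diff max_def)

lemma pen_mono:
  assumes "x \<subseteq> {1..n}" "y \<subseteq> {1..n}" "fit n w B y \<le> fit n w B x"
  shows "B - card y \<le> B - card x"
proof (rule ccontr)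
  assume "\<not> ?thesis"
  then have "real (B - card x) + 1 \<le> real (B - card y)" by linarith
  then have "(real (B - card x) + 1) * M \<le> real (B - card y) * M" using M_pos by (intro mult_right_mono) auto
  moreover have "W x < M" "0 \<le> W y" using W_bounds assms by auto
  ultimately show False using assms(3) unfolding fit_eq by (simp add: algebra_simps)
qed

definition "t = w B"
definition "L = {i\<in>{1..n}. w i < t}"
definition "H = {i\<in>{1..n}. t < w i}"
definition "kk x = card (x \<inter> H) + card (L - x)"
definition "phi x = (if card x < B then 2*n + (B - card x) else if B < card x then n + (card x - B) else kk x)"

lemma finL: "finite L" and finH: "finite H" and LH: "L \<inter> H = {}" and Lsub: "L \<subseteq> {1..n}" and Hsub: "H \<subseteq> {1..n}"
  unfolding L_def H_def by auto

lemma card_L: "card L < B"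
proof -
  have "L \<subseteq> {1..<B}"
  proof
    fix i assume "i \<in> L"
    then have "1 \<le> i" "i \<le> n" "w i < w B" unfolding L_def t_def by auto
    then show "i \<in> {1..<B}" using w_mono[of B i] B1 by (cases "B \<le> i") auto
  qed
  from card_mono[OF _ this] show ?thesis using B1 by simp
qed

lemma card_LE: "B \<le> card ({1..n} - H)"
proof -
  have "{1..B} \<subseteq> {1..n} - H"
    unfolding H_def t_def using w_mono Bn by fastforce
  from card_mono[OF _ this] show ?thesis by simp
qed

lemma kk_le: assumes "x \<subseteq> {1..n}" shows "kk x \<le> n"
proof -
  have "kk x = card ((x \<inter> H) \<union> (L - x))" unfolding kk_def
    using finL finH by (subst card_Un_disjoint) auto
  also have "\<dots> \<le> card {1..n}" using assms Lsub by (intro card_mono) auto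
  finally show ?thesis by simp
qed

lemma phi_le: assumes "x \<subseteq> {1..n}" shows "phi x \<le> 3 * n" "B \<le> card x \<Longrightarrow> phi x \<le> 2 * n"
proof -
  have "card x \<le> n" using card_mono[OF _ assms] by simp
  then show "phi x \<le> 3 * n" "B \<le> card x \<Longrightarrow> phi x \<le> 2 * n"
    using kk_le[OF assms] Bn unfolding phi_def by auto
qed

lemma phi0_opt:
  assumes x: "x \<subseteq> {1..n}" and p: "phi x = 0"
  shows "optimal n w B x"
proof -
  have cx: "card x = B" and k: "kk x = 0" using p B1 unfolding phi_def by (auto split: if_splits)
  have xH: "x \<inter> H = {}" and Lx: "L \<subseteq> x"
    using k finL finH unfolding kk_def by auto
  have fx: "finite x" using x finite_subset by blast
  have tpos: "t > 0" unfolding t_def using w_pos B1 Bn by auto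
  have xLE: "\<And>i. i \<in> x - L \<Longrightarrow> w i = t"
    using x xH unfolding L_def H_def by fastforce
  have Wx: "W x = sum w L + t * (real B - real (card L))"
  proof -
    have "W x = sum w L + sum w (x - L)" unfolding f_obj_def
      using fx Lx by (metis add.commute sum.subset_diff)
    also have "sum w (x - L) = t * real (card (x - L))" using xLE by simp
    also have "card (x - L) = B - card L" using cx Lx fx by (simp add: card_Diff_subset finite_subset)
    finally show ?thesis using card_L by (simp add: of_nat_diff)
  qed
  have "\<forall>y\<in>search_space n. B \<le> ones y \<longrightarrow> W x \<le> W y"
  proof (intro ballI impI)
    fix y assume y: "y \<in> search_space n" and cy: "B \<le> ones y"
    have ys: "y \<subseteq> {1..n}" using y unfolding search_space_def by auto
    have fy: "finite y" using ys finite_subset by blast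
    have Wy: "W y = sum w (y \<inter> L) + sum w (y - L)" unfolding f_obj_def
      using fy by (metis sum.Int_Diff)
    have "sum w (y - L) \<ge> t * real (card (y - L))"
    proof -
      have "\<And>i. i \<in> y - L \<Longrightarrow> t \<le> w i" using ys unfolding L_def by force
      then have "sum (\<lambda>_. t) (y - L) \<le> sum w (y - L)" by (intro sum_mono) auto
      then show ?thesis by (simp add: mult.commute)
    qed
    moreover have "card y = card (y \<inter> L) + card (y - L)" using card_split[OF fy] .
    moreover have "card L = card (L \<inter> y) + card (L - y)" using card_split[OF finL] .
    moreover have "sum w L = sum w (L \<inter> y) + sum w (L - y)" using finL by (metis sum.Int_Diff)
    moreover have "sum w (L - y) \<le> t * real (card (L - y))"
    proof -
      have "\<And>i. i \<in> L - y \<Longrightarrow> w i \<le> t" unfolding L_def by force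
      then have "sum w (L - y) \<le> sum (\<lambda>_. t) (L - y)" by (intro sum_mono) auto
      then show ?thesis by (simp add: mult.commute)
    qed
    moreover have "L \<inter> y = y \<inter> L" by auto
    moreover have "real B \<le> real (card y)" using cy unfolding ones_def by simp
    ultimately have "sum w L + t * (real B - real (card L)) \<le> W y"
      unfolding Wy using tpos
      by (smt (verit) mult_left_mono of_nat_add distrib_left)
    then show "W x \<le> W y" using Wx by simp
  qed
  then show ?thesis unfolding optimal_def search_space_def ones_def using x cx by auto
qed

lemma ind_def_aux: "(if P then 1 else 0 :: nat) = of_bool P" by simp

lemma kk_swap:
  assumes "i \<in> x" "j \<notin> x"
  shows "kk (insert j (x - {i})) + of_bool (i \<in> H) + of_bool (j \<in> L) = kk x + of_bool (j \<in> H) + of_bool (i \<in> L)"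
proof -
  have ij: "i \<noteq> j" using assms by auto
  have fH: "finite (x \<inter> H)" "finite (L - x)" using finH finL by auto
  have A: "card (insert j (x - {i}) \<inter> H) + of_bool (i \<in> H) = card (x \<inter> H) + of_bool (j \<in> H)"
  proof -
    have e: "insert j (x - {i}) \<inter> H = (if j \<in> H then insert j else id) ((x \<inter> H) - {i})" by auto
    have "i \<in> H \<Longrightarrow> card (x \<inter> H) > 0" using fH assms card_gt_0_iff by blast
    then show ?thesis unfolding e using fH assms
      by (cases "j \<in> H"; cases "i \<in> H") (auto simp: card_Diff_singleton card_insert_if Suc_leI card_gt_0_iff)
  qed
  have C: "card (L - insert j (x - {i})) + of_bool (j \<in> L) = card (L - x) + of_bool (i \<in> L)"
  proof -
    have e: "L - insert j (x - {i}) = (if i \<in> L then insert i else id) ((L - x) - {j})" using ij by auto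
    have "j \<in> L \<Longrightarrow> card (L - x) > 0" using fH assms card_gt_0_iff by blast
    then show ?thesis unfolding e using fH assms
      by (cases "j \<in> L"; cases "i \<in> L") (auto simp: card_Diff_singleton card_insert_if Suc_leI card_gt_0_iff)
  qed
  show ?thesis using A C unfolding kk_def by simp
qed

lemma W_swap:
  assumes "i \<in> x" "j \<notin> x" "finite x"
  shows "W (insert j (x - {i})) = W x - w i + w j"
  using assms unfolding f_obj_def by (simp add: sum_diff1)

end

lemma pair_card:
  assumes "P \<subseteq> x \<times> (- x)" "finite P"
  shows "card ((\<lambda>(i,j). {i,j::nat}) ` P) = card P"
proof (rule card_image, rule inj_onI)
  fix p q assume p: "p \<in> P" and q: "q \<in> P" and e: "(\<lambda>(i,j). {i,j::nat}) p = (\<lambda>(i,j). {i,j}) q"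
  obtain i j where pij: "p = (i,j)" by force
  obtain i' j' where qij: "q = (i',j')" by force
  have "i \<in> x" "j \<notin> x" "i' \<in> x" "j' \<notin> x" using p q assms(1) pij qij by auto
  moreover have "{i,j} = {i',j'}" using e pij qij by simp
  ultimately show "p = q" using pij qij by (metis doubleton_eq_iff)
qed

context rctx begin

definition "g x S = (let x' = (x - S) \<union> (S - x) in if fit n w B x' \<le> fit n w B x then x' else x)"

lemma step_eq: "rls_step n w B x = map_pmf (g x) (flip_set n)"
  unfolding rls_step_def g_def map_pmf_def by (simp add: Let_def)

lemma phi_mono:
  assumes x: "x \<subseteq> {1..n}" and S: "S \<subseteq> {1..n}" "card S \<le> 2"
    and y: "y = (x - S) \<union> (S - x)" and f: "fit n w B y \<le> fit n w B x"
  shows "phi y \<le> phi x"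
proof -
  have fx: "finite x" and fS: "finite S" using x S finite_subset by auto
  have ys: "y \<subseteq> {1..n}" using x S y by auto
  have c1: "card y = card (x - S) + card (S - x)" unfolding y using fx fS by (subst card_Un_disjoint) auto
  have c2: "card x = card (S \<inter> x) + card (x - S)" using card_split[OF fx, of S] by (simp add: Int_commute)
  have c3: "card S = card (S \<inter> x) + card (S - x)" using card_split[OF fS] .
  have xS: "x \<inter> S = S \<inter> x" by auto
  have pen: "B - card y \<le> B - card x" using pen_mono[OF x ys] f by simp
  show ?thesis
  proof (cases "card x < B")
    case True
    then show ?thesis
    proof (cases "card y < B")
      case True
      then show ?thesis using \<open>card x < B\<close> pen unfolding phi_def by auto
    next
      case False
      then show ?thesis using phi_le[OF ys] \<open>card x < B\<close> unfolding phi_def by auto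
    qed
  next
    case False
    then have cyB: "B \<le> card y" using pen by auto
    have Wle: "W y \<le> W x" using f False cyB unfolding fit_eq by simp
    have cyx: "card y \<le> card x"
    proof (rule ccontr)
      assume "\<not> ?thesis"
      then have a1: "card (S \<inter> x) = 0" using c1 c2 c3 xS S by linarith
      have a2: "card (S - x) > 0" using \<open>\<not> card y \<le> card x\<close> c1 c2 c3 xS S by linarith
      from a1 a2 have Sx: "S \<inter> x = {}" "S \<noteq> {}" using fS by auto
      then have yxS: "y = x \<union> S" unfolding y by auto
      have "W y = W x + sum w S" unfolding yxS f_obj_def using Sx fx fS by (metis sum.union_disjoint Int_commute)
      moreover have "sum w S > 0" using Sx fS S w_pos by (intro sum_pos) auto
      ultimately show False using Wle by simp
    qed
    show ?thesis
    proof (cases "B < card x")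
      case True
      then show ?thesis using cyx cyB kk_le[OF ys] unfolding phi_def by auto
    next
      case False
      then have cx: "card x = B" and cy: "card y = B" using \<open>\<not> card x < B\<close> cyx cyB by auto
      have eq1: "card (S \<inter> x) = card (S - x)" using cx cy c1 c2 c3 xS S by linarith
      have eq2: "card (S - x) \<le> 1" using cx cy c1 c2 c3 xS S by linarith
      note eq = eq1 eq2
      show ?thesis
      proof (cases "card (S - x) = 0")
        case True
        have z: "card (S \<inter> x) = 0" using True eq by simp
        have "S \<inter> x = {}" using z fS by simp
        moreover have "S - x = {}" using True fS by simp
        ultimately have "S = {}" by blast
        then show ?thesis using y by simp
      next
        case False
        then have "card (S \<inter> x) = 1" "card (S - x) = 1" using eq by auto
        then obtain i j where i: "S \<inter> x = {i}" and j: "S - x = {j}" by (metis card_1_singletonE)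
        have ix: "i \<in> x" and jx: "j \<notin> x" and jn: "j \<in> {1..n}" and iin: "i \<in> {1..n}" using i j S x by auto
        have ye: "y = insert j (x - {i})" unfolding y using i j by auto
        have "W y = W x - w i + w j" unfolding ye using W_swap[OF ix jx fx] .
        then have wji: "w j \<le> w i" using Wle by simp
        have h1: "j \<in> H \<Longrightarrow> i \<in> H" using wji iin unfolding H_def by auto
        have h2: "i \<in> L \<Longrightarrow> j \<in> L" using wji jn unfolding L_def by auto
        have "kk y + of_bool (i \<in> H) + of_bool (j \<in> L) = kk x + of_bool (j \<in> H) + of_bool (i \<in> L)"
          unfolding ye by (rule kk_swap[OF ix jx])
        then have "kk y \<le> kk x" using h1 h2 by (cases "i \<in> H"; cases "j \<in> L"; cases "j \<in> H"; cases "i \<in> L") auto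
        then show ?thesis using cx cy unfolding phi_def by simp
      qed
    qed
  qed
qed

lemma step_support:
  assumes x: "x \<subseteq> {1..n}" and y: "y \<in> set_pmf (rls_step n w B x)"
  shows "y \<subseteq> {1..n} \<and> phi y \<le> phi x"
proof -
  obtain S where S: "S \<in> set_pmf (flip_set n)" and yg: "y = g x S" using y unfolding step_eq by auto
  have S': "S \<subseteq> {1..n}" "card S \<le> 2" using set_flip_set[OF S] by auto
  show ?thesis
  proof (cases "fit n w B ((x - S) \<union> (S - x)) \<le> fit n w B x")
    case True
    then have "y = (x - S) \<union> (S - x)" unfolding yg g_def by (simp add: Let_def)
    then show ?thesis using phi_mono[OF x S'] True x S' by auto
  next
    case False
    then have "y = x" unfolding yg g_def by (simp add: Let_def)
    then show ?thesis using x by simp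
  qed
qed

definition "pr m = (if m \<le> n then real m ^ 2 / (4 * real n ^ 2) else 1 / (2 * real n))"

lemma pr_pos: "0 < m \<Longrightarrow> 0 < pr m"
  unfolding pr_def using n1 by auto

lemma pr_le1: "pr m \<le> 1"
proof (cases "m \<le> n")
  case True
  then have "real m ^ 2 \<le> real n ^ 2" by (simp add: power_mono)
  then have "real m ^ 2 \<le> 4 * real n ^ 2" using zero_le_power2[of "real n"] by linarith
  then show ?thesis unfolding pr_def using True n1 by (simp add: divide_le_eq)
next
  case False then show ?thesis unfolding pr_def using n1 by (simp add: divide_le_eq)
qed

end

context rctx begin

lemma pair_good:
  assumes x: "x \<subseteq> {1..n}" and cx: "card x = B" and i: "i \<in> x" and j: "j \<in> {1..n} - x"
    and wji: "w j \<le> w i" and kd: "kk (insert j (x - {i})) < kk x"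
  shows "{i,j} \<in> Cset n 2 \<inter> (g x -` {y. phi y < phi x})"
proof -
  have fx: "finite x" using x finite_subset by blast
  have ij: "i \<noteq> j" using i j by auto
  have ye: "(x - {i,j}) \<union> ({i,j} - x) = insert j (x - {i})" using i j by auto
  have cy: "card (insert j (x - {i})) = B" using cx i j fx B1 by (simp add: card_insert_if)
  have "fit n w B (insert j (x - {i})) \<le> fit n w B x"
    unfolding fit_eq cy cx using W_swap[OF i _ fx, of j] j wji by simp
  then have "g x {i,j} = insert j (x - {i})" unfolding g_def ye by (simp add: Let_def)
  moreover have "phi (insert j (x - {i})) < phi x" unfolding phi_def cy cx using kd by simp
  moreover have "{i,j} \<in> Cset n 2" unfolding Cset_def using i j x ij by auto
  ultimately show ?thesis by simp
qed

lemma wjM: "j \<in> {1..n} \<Longrightarrow> w j \<le> M"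
proof -
  assume "j \<in> {1..n}"
  then have "w j \<le> w n" using w_le_wn by auto
  also have "w n \<le> real n * w n" using n1 w_pos[of n] by (simp add: mult_le_cancel_right1)
  finally show "w j \<le> M" unfolding M_def by simp
qed

lemma dec_lt:
  assumes x: "x \<subseteq> {1..n}" and p0: "phi x > 0" and lt: "card x < B"
  shows "measure_pmf.prob (rls_step n w B x) {y. phi y < phi x} \<ge> pr (phi x)"
proof -
  let ?D = "{y. phi y < phi x}"
  have fx: "finite x" using x finite_subset by blast
  have P: "measure_pmf.prob (rls_step n w B x) ?D = measure_pmf.prob (flip_set n) (g x -` ?D)"
    unfolding step_eq by simp
    have "\<not> {1..n} \<subseteq> x"
    proof
      assume "{1..n} \<subseteq> x"
      then have "card {1..n} \<le> card x" by (rule card_mono[OF fx])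
      then show False using lt Bn by simp
    qed
    then obtain j where j: "j \<in> {1..n}" "j \<notin> x" by blast
    have ye: "(x - {j}) \<union> ({j} - x) = insert j x" using j by auto
    have cy: "card (insert j x) = card x + 1" using j fx by simp
    have "fit n w B (insert j x) \<le> fit n w B x"
      unfolding fit_eq cy using j fx lt wjM[OF j(1)] by (simp add: f_obj_def of_nat_diff algebra_simps)
    then have "g x {j} = insert j x" unfolding g_def ye by (simp add: Let_def)
    moreover have "phi (insert j x) < phi x"
    proof -
      have kb: "kk (insert j x) \<le> n" using x j by (intro kk_le) auto
      show ?thesis
      proof (cases "card x + 1 < B")
        case True
        then show ?thesis unfolding phi_def cy using lt by simp
      next
        case False
        then have "card x + 1 = B" using lt by simp
        then show ?thesis unfolding phi_def cy using lt kb by simp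
      qed
    qed
    ultimately have "{j} \<in> g x -` ?D" by simp
    then have "measure_pmf.prob (flip_set n) (g x -` ?D) \<ge> 1 / (2 * real n)"
      by (rule prob_flip_single[OF j(1)])
    moreover have "pr (phi x) = 1 / (2 * real n)" unfolding pr_def phi_def using lt by auto
    ultimately show ?thesis using P by simp
qed

lemma dec_gt:
  assumes x: "x \<subseteq> {1..n}" and p0: "phi x > 0" and gt: "B < card x"
  shows "measure_pmf.prob (rls_step n w B x) {y. phi y < phi x} \<ge> pr (phi x)"
proof -
  let ?D = "{y. phi y < phi x}"
  have fx: "finite x" using x finite_subset by blast
  have P: "measure_pmf.prob (rls_step n w B x) ?D = measure_pmf.prob (flip_set n) (g x -` ?D)"
    unfolding step_eq by simp
    have "x \<noteq> {}" using gt by (metis card.empty not_less0)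
    then obtain i where i: "i \<in> x" by blast
    have iin: "i \<in> {1..n}" using i x by auto
    have ye: "(x - {i}) \<union> ({i} - x) = x - {i}" using i by auto
    have cy: "card (x - {i}) = card x - 1" using i fx by simp
    have "fit n w B (x - {i}) \<le> fit n w B x"
      unfolding fit_eq cy using i fx gt w_pos[of i] iin by (simp add: f_obj_def sum_diff1)
    then have "g x {i} = x - {i}" unfolding g_def ye by (simp add: Let_def)
    moreover have "phi (x - {i}) < phi x"
    proof -
      have kb: "kk (x - {i}) \<le> n" using x by (intro kk_le) auto
      show ?thesis
      proof (cases "B < card x - 1")
        case True
        then show ?thesis unfolding phi_def cy using gt by simp
      next
        case False
        then have "card x - 1 = B" using gt by simp
        then show ?thesis unfolding phi_def cy using gt kb by simp
      qed
    qed
    ultimately have "{i} \<in> g x -` ?D" by simp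
    then have "measure_pmf.prob (flip_set n) (g x -` ?D) \<ge> 1 / (2 * real n)"
      by (rule prob_flip_single[OF iin])
    moreover have "pr (phi x) = 1 / (2 * real n)" unfolding pr_def phi_def using gt by auto
    ultimately show ?thesis using P by simp
qed

end

context rctx begin

lemma dec_eq:
  assumes x: "x \<subseteq> {1..n}" and p0: "phi x > 0" and eq: "card x = B"
  shows "measure_pmf.prob (rls_step n w B x) {y. phi y < phi x} \<ge> pr (phi x)"
proof -
  let ?D = "{y. phi y < phi x}"
  have fx: "finite x" using x finite_subset by blast
  have P: "measure_pmf.prob (rls_step n w B x) ?D = measure_pmf.prob (flip_set n) (g x -` ?D)"
    unfolding step_eq by simp
    define a where "a = card (x \<inter> H)"
    define c where "c = card (L - x)"
    have k: "phi x = a + c" unfolding phi_def a_def c_def kk_def using eq by simp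
    have kn: "a + c \<le> n" using kk_le[OF x] unfolding a_def c_def kk_def .
    have prk: "pr (phi x) = real (a + c) ^ 2 / (4 * real n ^ 2)" unfolding pr_def k using kn by simp
    have n2: "2 \<le> n"
    proof (rule ccontr)
      assume "\<not> 2 \<le> n"
      then have nn: "n = 1" using n1 by simp
      then have "B = 1" using B1 Bn by simp
      then have "L = {}" "H = {}" unfolding L_def H_def t_def using nn by auto
      then show False using p0 k unfolding a_def c_def by simp
    qed
    have main: "\<And>P. P \<subseteq> x \<times> ({1..n} - x) \<Longrightarrow>
        (\<And>i j. (i,j) \<in> P \<Longrightarrow> w j \<le> w i \<and> kk (insert j (x - {i})) < kk x) \<Longrightarrow>
        measure_pmf.prob (flip_set n) (g x -` ?D) \<ge> real (card P) / (real n)^2"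
    proof -
      fix P assume Psub: "P \<subseteq> x \<times> ({1..n} - x)"
        and Pg: "\<And>i j. (i,j) \<in> P \<Longrightarrow> w j \<le> w i \<and> kk (insert j (x - {i})) < kk x"
      have finP: "finite P" using Psub fx by (meson finite_Diff finite_SigmaI finite_atLeastAtMost finite_subset)
      let ?G = "(\<lambda>(i,j). {i,j::nat}) ` P"
      have cG: "card ?G = card P" using Psub finP by (intro pair_card[of P x]) auto
      have Gs: "?G \<subseteq> Cset n 2 \<inter> (g x -` ?D)"
      proof
        fix S assume "S \<in> ?G"
        then obtain i j where ij: "(i,j) \<in> P" "S = {i,j}" by auto
        then show "S \<in> Cset n 2 \<inter> (g x -` ?D)" using pair_good[OF x eq, of i j] Pg[OF ij(1)] Psub by auto
      qed
      show "measure_pmf.prob (flip_set n) (g x -` ?D) \<ge> real (card P) / (real n)^2"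
        using prob_flip_pairs[OF n2 Gs] unfolding cG .
    qed
    have fin1: "finite ({1..n} - H - x)" "finite (x - L)" "finite (L - x)" "finite (x \<inter> H)" using fx finL by auto
    show ?thesis
    proof (cases "c \<le> a")
      case True
      let ?P = "(x \<inter> H) \<times> ({1..n} - H - x)"
      have "card ({1..n} - H) = card (({1..n} - H) \<inter> x) + card ({1..n} - H - x)" by (rule card_split) simp
      moreover have "card (({1..n} - H) \<inter> x) = card (x - H)" using x by (intro arg_cong[where f=card]) auto
      moreover have "card x = card (x \<inter> H) + card (x - H)" by (rule card_split[OF fx])
      ultimately have ca: "a \<le> card ({1..n} - H - x)" using card_LE eq unfolding a_def by linarith
      have "measure_pmf.prob (flip_set n) (g x -` ?D) \<ge> real (card ?P) / (real n)^2"
      proof (rule main)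
        show "?P \<subseteq> x \<times> ({1..n} - x)" by auto
      next
        fix i j assume ij: "(i,j) \<in> ?P"
        then have "w j \<le> w i" unfolding H_def by auto
        moreover have "kk (insert j (x - {i})) + of_bool (i \<in> H) + of_bool (j \<in> L) = kk x + of_bool (j \<in> H) + of_bool (i \<in> L)"
          using ij by (intro kk_swap) auto
        moreover have "i \<in> H" "j \<notin> H" "i \<notin> L" using ij LH by auto
        ultimately show "w j \<le> w i \<and> kk (insert j (x - {i})) < kk x" by simp
      qed
      moreover have "card ?P = a * card ({1..n} - H - x)" unfolding a_def by (simp add: card_cartesian_product)
      moreover have "real (a + c) ^ 2 / 4 \<le> real a * real (card ({1..n} - H - x))"
      proof -
        have "real (a + c) \<le> 2 * real a" using True by simp
        then have "real (a + c) ^ 2 \<le> (2 * real a) ^ 2" by (intro power_mono) auto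
        then have "real (a + c) ^ 2 / 4 \<le> (2 * real a) ^ 2 / 4" by (intro divide_right_mono) auto
        also have "(2 * real a) ^ 2 / 4 = real a * real a" by (simp add: power2_eq_square)
        finally have "real (a + c) ^ 2 / 4 \<le> real a * real a" .
        also have "\<dots> \<le> real a * real (card ({1..n} - H - x))" using ca by (simp add: mult_left_mono)
        finally show ?thesis .
      qed
      ultimately have "measure_pmf.prob (flip_set n) (g x -` ?D) \<ge> (real (a + c) ^ 2 / 4) / (real n)^2"
        using divide_right_mono[of "real (a + c) ^ 2 / 4" "real (card ?P)" "(real n)^2"] by (simp add: of_nat_mult)
      then show ?thesis using P prk by simp
    next
      case False
      let ?P = "(x - L) \<times> (L - x)"
      have "card x = card (x \<inter> L) + card (x - L)" by (rule card_split[OF fx])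
      moreover have "card L = card (L \<inter> x) + card (L - x)" by (rule card_split[OF finL])
      moreover have "card (L \<inter> x) = card (x \<inter> L)" by (simp add: Int_commute)
      ultimately have ca: "c \<le> card (x - L)" using card_L eq unfolding c_def by linarith
      have "measure_pmf.prob (flip_set n) (g x -` ?D) \<ge> real (card ?P) / (real n)^2"
      proof (rule main)
        show "?P \<subseteq> x \<times> ({1..n} - x)" using Lsub by auto
      next
        fix i j assume ij: "(i,j) \<in> ?P"
        then have "w j \<le> w i" using x unfolding L_def by force
        moreover have "kk (insert j (x - {i})) + of_bool (i \<in> H) + of_bool (j \<in> L) = kk x + of_bool (j \<in> H) + of_bool (i \<in> L)"
          using ij by (intro kk_swap) auto
        moreover have "j \<in> L" "j \<notin> H" "i \<notin> L" using ij LH by auto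
        ultimately show "w j \<le> w i \<and> kk (insert j (x - {i})) < kk x" by simp
      qed
      moreover have "card ?P = card (x - L) * c" unfolding c_def by (simp add: card_cartesian_product)
      moreover have "real (a + c) ^ 2 / 4 \<le> real (card (x - L)) * real c"
      proof -
        have "real (a + c) \<le> 2 * real c" using False by simp
        then have "real (a + c) ^ 2 \<le> (2 * real c) ^ 2" by (intro power_mono) auto
        then have "real (a + c) ^ 2 / 4 \<le> (2 * real c) ^ 2 / 4" by (intro divide_right_mono) auto
        also have "(2 * real c) ^ 2 / 4 = real c * real c" by (simp add: power2_eq_square)
        finally have "real (a + c) ^ 2 / 4 \<le> real c * real c" .
        also have "\<dots> \<le> real (card (x - L)) * real c" using ca by (simp add: mult_right_mono)
        finally show ?thesis .
      qed
      ultimately have "measure_pmf.prob (flip_set n) (g x -` ?D) \<ge> (real (a + c) ^ 2 / 4) / (real n)^2"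
        using divide_right_mono[of "real (a + c) ^ 2 / 4" "real (card ?P)" "(real n)^2"] by (simp add: of_nat_mult)
      then show ?thesis using P prk by simp
    qed
qed

lemma dec_prob:
  assumes x: "x \<subseteq> {1..n}" and p0: "phi x > 0"
  shows "measure_pmf.prob (rls_step n w B x) {y. phi y < phi x} \<ge> pr (phi x)"
  using dec_lt[OF x p0] dec_gt[OF x p0] dec_eq[OF x p0] by linarith

end

lemma inv_sq_sum: "N \<ge> 1 \<Longrightarrow> (\<Sum>m\<in>{1..N}. 1 / real m ^ 2) \<le> 2 - 1 / real N"
proof (induction N rule: dec_induct)
  case base then show ?case by simp
next
  case (step N)
  have N1: "real N \<ge> 1" using step by simp
  have e: "1 / real N - 1 / (real N + 1) = 1 / (real N * (real N + 1))" using N1 by (simp add: field_simps)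
  have "1 / (real N + 1) ^ 2 \<le> 1 / (real N * (real N + 1))"
    using N1 by (intro divide_left_mono) (auto simp: power2_eq_square intro: mult_right_mono)
  then have "1 / (real N + 1) ^ 2 \<le> 1 / real N - 1 / (real N + 1)" using e by simp
  then show ?case using step by (simp add: add.commute)
qed

context rctx begin

definition "V x = (\<Sum>m\<in>{1..phi x}. 1 / pr m)"

lemma V_nonneg: "0 \<le> V x"
  unfolding V_def using pr_pos by (intro sum_nonneg) (auto intro: less_imp_le)

lemma V_mono: "phi y \<le> phi x \<Longrightarrow> V y \<le> V x"
  unfolding V_def using pr_pos by (intro sum_mono2) (auto intro: less_imp_le)

lemma V_dec: assumes "phi y < phi x" shows "V y + 1 / pr (phi x) \<le> V x"
proof -
  obtain k where k: "phi x = Suc k" using assms by (cases "phi x") auto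
  have "V y \<le> (\<Sum>m\<in>{1..k}. 1 / pr m)"
    unfolding V_def using pr_pos assms k by (intro sum_mono2) (auto intro: less_imp_le)
  moreover have "V x = (\<Sum>m\<in>{1..k}. 1 / pr m) + 1 / pr (phi x)"
    unfolding V_def k by simp
  ultimately show ?thesis by simp
qed

lemma fin_step: assumes x: "x \<subseteq> {1..n}" shows "finite (set_pmf (rls_step n w B x))"
proof -
  have "set_pmf (rls_step n w B x) \<subseteq> Pow {1..n}" using step_support[OF x] by blast
  then show ?thesis by (rule finite_subset) simp
qed

lemma drift:
  assumes x: "x \<subseteq> {1..n}" and no: "\<not> optimal n w B x"
  shows "1 + measure_pmf.expectation (rls_step n w B x) V \<le> V x"
proof -
  let ?p = "rls_step n w B x"
  let ?D = "{y. phi y < phi x}"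
  have p0: "phi x > 0" using phi0_opt[OF x] no by auto
  have pp: "pr (phi x) > 0" using pr_pos[OF p0] .
  have fin: "finite (set_pmf ?p)" using fin_step[OF x] .
  have pw: "\<And>y. y \<in> set_pmf ?p \<Longrightarrow> V y \<le> V x - indicator ?D y / pr (phi x)"
  proof -
    fix y assume y: "y \<in> set_pmf ?p"
    have "phi y \<le> phi x" using step_support[OF x y] by simp
    then show "V y \<le> V x - indicator ?D y / pr (phi x)"
      using V_dec[of y x] V_mono[of y x] by (cases "phi y < phi x") (auto simp: indicator_def)
  qed
  have "measure_pmf.expectation ?p V \<le> measure_pmf.expectation ?p (\<lambda>y. V x - indicator ?D y / pr (phi x))"
    using pw fin by (intro integral_mono_AE) (auto simp: AE_measure_pmf_iff intro: integrable_measure_pmf_finite)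
  also have "\<dots> = V x - measure_pmf.prob ?p ?D / pr (phi x)"
    using fin by (simp add: integrable_measure_pmf_finite)
  also have "\<dots> \<le> V x - 1"
    using dec_prob[OF x p0] pp by (simp add: le_divide_eq)
  finally show ?thesis by simp
qed

lemma partial: "x \<subseteq> {1..n} \<Longrightarrow> (\<Sum>s<tt. not_yet_opt_prob n w B x s) \<le> V x"
proof (induction tt arbitrary: x)
  case 0 then show ?case using V_nonneg by simp
next
  case (Suc tt)
  note x = Suc.prems
  let ?p = "rls_step n w B x"
  have fin: "finite (set_pmf ?p)" using fin_step[OF x] .
  show ?case
  proof (cases "optimal n w B x")
    case True
    then show ?thesis using V_nonneg by (simp add: nyop_0 nyop_Suc sum.lessThan_Suc_shift del: sum.lessThan_Suc)
  next
    case False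
    have "(\<Sum>s<Suc tt. not_yet_opt_prob n w B x s) = 1 + (\<Sum>s<tt. measure_pmf.expectation ?p (\<lambda>y. not_yet_opt_prob n w B y s))"
      using False by (simp add: nyop_0 nyop_Suc sum.lessThan_Suc_shift del: sum.lessThan_Suc)
    also have "\<dots> = 1 + measure_pmf.expectation ?p (\<lambda>y. \<Sum>s<tt. not_yet_opt_prob n w B y s)"
      by (subst Bochner_Integration.integral_sum) (auto intro: integrable_measure_pmf_finite[OF fin])
    also have "\<dots> \<le> 1 + measure_pmf.expectation ?p V"
    proof (intro add_left_mono integral_mono_AE integrable_measure_pmf_finite[OF fin])
      have "\<forall>y\<in>set_pmf ?p. (\<Sum>s<tt. not_yet_opt_prob n w B y s) \<le> V y"
      proof
        fix y assume "y \<in> set_pmf ?p"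
        then have "y \<subseteq> {1..n}" using step_support[OF x] by blast
        then show "(\<Sum>s<tt. not_yet_opt_prob n w B y s) \<le> V y" by (rule Suc.IH)
      qed
      then show "AE y in measure_pmf ?p. (\<Sum>s<tt. not_yet_opt_prob n w B y s) \<le> V y"
        by (simp add: AE_measure_pmf_iff)
    qed
    also have "\<dots> \<le> V x" using drift[OF x False] .
    finally show ?thesis .
  qed
qed

lemma V_bound: assumes x: "x \<subseteq> {1..n}" shows "V x \<le> 14 * real n ^ 2"
proof -
  have "V x \<le> (\<Sum>m\<in>{1..3*n}. 1 / pr m)"
    unfolding V_def using phi_le(1)[OF x] pr_pos by (intro sum_mono2) (auto intro: less_imp_le)
  also have "\<dots> \<le> (\<Sum>m\<in>{1..3*n}. 4 * real n ^ 2 * (1 / real m ^ 2) + 2 * real n)"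
  proof (intro sum_mono)
    fix m assume m: "m \<in> {1..3*n}"
    show "1 / pr m \<le> 4 * real n ^ 2 * (1 / real m ^ 2) + 2 * real n"
    proof (cases "m \<le> n")
      case True
      then have "1 / pr m = 4 * real n ^ 2 * (1 / real m ^ 2)" unfolding pr_def using m by simp
      then show ?thesis by simp
    next
      case False
      then have "1 / pr m = 2 * real n" unfolding pr_def by simp
      then show ?thesis by simp
    qed
  qed
  also have "\<dots> = 4 * real n ^ 2 * (\<Sum>m\<in>{1..3*n}. 1 / real m ^ 2) + 3 * real n * (2 * real n)"
    by (simp add: sum.distrib sum_distrib_left)
  also have "\<dots> \<le> 4 * real n ^ 2 * 2 + 3 * real n * (2 * real n)"
  proof -
    have "(\<Sum>m\<in>{1..3*n}. 1 / real m ^ 2) \<le> 2 - 1 / real (3*n)" using inv_sq_sum[of "3*n"] n1 by simp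
    also have "\<dots> \<le> 2" by simp
    finally show ?thesis by (intro add_right_mono mult_left_mono) auto
  qed
  also have "\<dots> = 14 * real n ^ 2" by (simp add: power2_eq_square)
  finally show ?thesis .
qed

lemma exp_bound: assumes x: "x \<subseteq> {1..n}" shows "expected_opt_time n w B x \<le> ennreal (14 * real n ^ 2)"
proof -
  have "expected_opt_time n w B x = (SUP tt. \<Sum>s<tt. ennreal (not_yet_opt_prob n w B x s))"
    unfolding expected_opt_time_def by (rule suminf_eq_SUP)
  also have "\<dots> \<le> ennreal (V x)"
  proof (rule SUP_least)
    fix tt
    have "(\<Sum>s<tt. ennreal (not_yet_opt_prob n w B x s)) = ennreal (\<Sum>s<tt. not_yet_opt_prob n w B x s)"
      by (rule sum_ennreal) (simp add: not_yet_opt_prob_def)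
    also have "\<dots> \<le> ennreal (V x)" using partial[OF x] by (rule ennreal_leI)
    finally show "(\<Sum>s<tt. ennreal (not_yet_opt_prob n w B x s)) \<le> ennreal (V x)" .
  qed
  also have "\<dots> \<le> ennreal (14 * real n ^ 2)" using V_bound[OF x] by (rule ennreal_leI)
  finally show ?thesis .
qed

end

theorem theorem3:
  "\<exists>C::real. \<forall>(n::nat) (w::nat \<Rightarrow> real) (B::nat) (x0::nat set).
     n \<ge> 1 \<longrightarrow> w 1 > 0 \<longrightarrow> (\<forall>i. 1 \<le> i \<and> i < n \<longrightarrow> w i \<le> w (Suc i)) \<longrightarrow>
     1 \<le> B \<longrightarrow> B \<le> n \<longrightarrow> x0 \<in> search_space n \<longrightarrow>
     expected_opt_time n w B x0 \<le> ennreal (C * (real n)^2)"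
proof (intro exI[of _ 14] allI impI)
  fix n :: nat and w :: "nat \<Rightarrow> real" and B :: nat and x0 :: "nat set"
  assume "n \<ge> 1" "w 1 > 0" "\<forall>i. 1 \<le> i \<and> i < n \<longrightarrow> w i \<le> w (Suc i)" "1 \<le> B" "B \<le> n" "x0 \<in> search_space n"
  then have ctx: "rctx n w B" unfolding rctx_def by blast
  have "x0 \<subseteq> {1..n}" using \<open>x0 \<in> search_space n\<close> unfolding search_space_def by simp
  from rctx.exp_bound[OF ctx this] show "expected_opt_time n w B x0 \<le> ennreal (14 * (real n)^2)" .
qed

end
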